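(* Let $n\ge1$ and $1\le k\le d$ be integers, $p=k/d$, and $\mathbf{e}_1,\dots,\mathbf{e}_n\in\mathbb{R}^d$. Let $F_i(\mathbf{w})=\frac12\|\mathbf{w}-\mathbf{e}_i\|_2^2$, $F(\mathbf{w})=\frac1n\sum_{i=1}^nF_i(\mathbf{w})$, and $\mathbf{w}^*=\frac1n\sum_{i=1}^n\mathbf{e}_i$ its minimizer. Consider the following algorithm with step size $\eta>0$: start from arbitrary $\mathbf{w}^{(0)}\in\mathbb{R}^d$ and $\mathbf{b}_i^{(0)}=\mathbf{0}$ for all $i$. At round $t=0,1,2,\dots$: each node $i$ computes $\mathbf{x}_i^{(t)}=\nabla F_i(\mathbf{w}^{(t)})=\mathbf{w}^{(t)}-\mathbf{e}_i$ and independently (across nodes and rounds) chooses a uniformly random subset $S_i^{(t)}\subseteq\{1,\dots,d\}$ of size $k$, sending $x_{ij}^{(t)}$ for $j\in S_i^{(t)}$; the server forms $\mathbf{h}_i'^{(t)}$ with $h'^{(t)}_{ij}=b^{(t)}_{ij}$ if $j\notin S_i^{(t)}$ and $h'^{(t)}_{ij}=b^{(t)}_{ij}+\frac dk(x^{(t)}_{ij}-b^{(t)}_{ij})$ if $j\in S_i^{(t)}$, sets $\hat{\mathbf{x}}^{(t)}=\frac1n\sum_i\mathbf{h}_i'^{(t)}$ and $\mathbf{w}^{(t+1)}=\mathbf{w}^{(t)}-\eta\hat{\mathbf{x}}^{(t)}$, and updates $b^{(t+1)}_{ij}=x^{(t)}_{ij}$ if $j\in S_i^{(t)}$ and $b^{(t+1)}_{ij}=b^{(t)}_{ij}$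 otherwise. If $$\eta\le\min\Big\{\frac{1}{1+\frac8n\big(\frac dk-1\big)},\ \frac p2\Big\},$$ then for all $t\ge0$, $$\mathbb{E}\big[\|\mathbf{w}^{(t+1)}-\mathbf{w}^*\|_2^2\big]\le(1-\eta)^{t+1}\Big[\|\mathbf{w}^{(0)}-\mathbf{w}^*\|_2^2+\frac1n\sum_{i=1}^n\|\nabla F_i(\mathbf{w}^* )\|_2^2\Big],$$ where the expectation is over all the random subsets.
   Context: Gradient descent on a heterogeneous quadratic objective with gradients aggregated by the Rand-$k$-Temporal estimator, where the server's stored vectors $\mathbf{b}_i$ are the most recently received values of each coordinate. *)

theory Defs
  imports "HOL-Probability.Probability"
begin

text \<open>Vectors in R^d are rendered as real^'d with d = CARD('d); coordinates are
indexed by the finite type 'd. Nodes are indexed by i < n.\<close>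

definition Floc :: "(nat \<Rightarrow> real^'d) \<Rightarrow> nat \<Rightarrow> real^'d \<Rightarrow> real" where
  "Floc e i w = (1/2) * (norm (w - e i))\<^sup>2"

definition Fglob :: "nat \<Rightarrow> (nat \<Rightarrow> real^'d) \<Rightarrow> real^'d \<Rightarrow> real" where
  "Fglob n e w = (1 / real n) * (\<Sum>i<n. Floc e i w)"

definition gradF :: "(nat \<Rightarrow> real^'d) \<Rightarrow> nat \<Rightarrow> real^'d \<Rightarrow> real^'d" where
  "gradF e i w = w - e i"

definition wstar :: "nat \<Rightarrow> (nat \<Rightarrow> real^'d) \<Rightarrow> real^'d" where
  "wstar n e = (1 / real n) *\<^sub>R (\<Sum>i<n. e i)"

text \<open>The server iteration. S (t,i) is the subset chosen by node i in round t.
Returns (w^(t), (b_i^(t))_i).\<close>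
fun traj :: "nat \<Rightarrow> nat \<Rightarrow> (nat \<Rightarrow> real^'d) \<Rightarrow> real \<Rightarrow> real^'d
             \<Rightarrow> (nat \<times> nat \<Rightarrow> 'd set) \<Rightarrow> nat \<Rightarrow> (real^'d) \<times> (nat \<Rightarrow> real^'d)" where
  "traj n k e \<eta> w0 S 0 = (w0, (\<lambda>i. 0))"
| "traj n k e \<eta> w0 S (Suc t) =
     (let w = fst (traj n k e \<eta> w0 S t);
          b = snd (traj n k e \<eta> w0 S t);
          x = (\<lambda>i. gradF e i w);
          h = (\<lambda>i. \<chi> j. if j \<in> S (t, i)
                          then b i $ j + (real CARD('d) / real k) * (x i $ j - b i $ j)
                          else b i $ j);
          xhat = (1 / real n) *\<^sub>R (\<Sum>i<n. h i)
      in (w - \<eta> *\<^sub>R xhat, (\<lambda>i. \<chi> j. if j \<in> S (t, i) then x i $ j else b i $ j)))"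

definition ksubsets :: "nat \<Rightarrow> 'd set set" where
  "ksubsets k = {A. card A = k}"

text \<open>Sample space of all choices for rounds 0..t and nodes 0..n-1;
the uniform distribution on it = independent uniform k-subsets.\<close>
definition Omega :: "nat \<Rightarrow> nat \<Rightarrow> nat \<Rightarrow> (nat \<times> nat \<Rightarrow> 'd::finite set) set" where
  "Omega n k t = ({..t} \<times> {..<n}) \<rightarrow>\<^sub>E ksubsets k"

end

theory Submission
  imports Defs
begin

lemma sq_expect:
  fixes M :: "'a pmf" and z :: "nat \<Rightarrow> 'a \<Rightarrow> real"
  assumes int: "\<And>f::'a\<Rightarrow>real. integrable (measure_pmf M) f"
    and m0: "\<And>i. i < n \<Longrightarrow> measure_pmf.expectation M (z i) = 0"
    and m2: "\<And>i i'. i < n \<Longrightarrow> i' < n \<Longrightarrow>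
       measure_pmf.expectation M (\<lambda>x. z i x * z i' x) = (if i = i' then q else 0)"
  shows "measure_pmf.expectation M (\<lambda>x. (a + (\<Sum>i<n. \<beta> i * z i x))\<^sup>2)
         = a\<^sup>2 + q * (\<Sum>i<n. (\<beta> i)\<^sup>2)"
proof -
  have e: "(a + (\<Sum>i<n. \<beta> i * z i x))\<^sup>2 = a\<^sup>2 + (\<Sum>i<n. (2 * a * \<beta> i) * z i x)
        + (\<Sum>i<n. \<Sum>i'<n. (\<beta> i * \<beta> i') * (z i x * z i' x))" for x
    by (simp add: power2_eq_square algebra_simps sum_product sum_distrib_left)
  have "measure_pmf.expectation M (\<lambda>x. (a + (\<Sum>i<n. \<beta> i * z i x))\<^sup>2)
     = a\<^sup>2 + (\<Sum>i<n. (2 * a * \<beta> i) * measure_pmf.expectation M (z i))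
        + (\<Sum>i<n. \<Sum>i'<n. (\<beta> i * \<beta> i') * measure_pmf.expectation M (\<lambda>x. z i x * z i' x))"
    unfolding e
    by (simp add: int Bochner_Integration.integral_sum Bochner_Integration.integral_add)
  also have "\<dots> = a\<^sup>2 + (\<Sum>i<n. \<Sum>i'<n. (\<beta> i * \<beta> i') * (if i = i' then q else 0))"
    by (simp add: m0 m2)
  also have "\<dots> = a\<^sup>2 + q * (\<Sum>i<n. (\<beta> i)\<^sup>2)"
    by (simp add: sum_distrib_left power2_eq_square if_distrib sum.delta mult_ac cong: if_cong)
  finally show ?thesis .
qed

lemma coef_ineq:
  fixes \<eta> p q c nn :: real
  assumes "nn \<ge> 1" "\<eta> > 0" "q \<ge> 0" "p > 0" "p \<le> 1" "\<eta> * (1 + 8 / nn * q) \<le> 1" "\<eta> \<le> p / 2"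
    and c: "c = 4 * \<eta>\<^sup>2 * q / (nn * p)"
  shows "(1-\<eta>)\<^sup>2 + 2*q*\<eta>\<^sup>2/nn + c*p \<le> 1 - \<eta>"
    and "2*q*\<eta>\<^sup>2/nn\<^sup>2 + c*(1-p)/nn \<le> (1-\<eta>)*c/nn"
proof -
  have cp: "c * p = 4 * \<eta>\<^sup>2 * q / nn" using assms by (simp add: field_simps)
  have "\<eta> * (1 + 6 / nn * q) \<le> \<eta> * (1 + 8 / nn * q)"
    using assms by (intro mult_left_mono) (auto simp: field_simps)
  hence h: "\<eta> * (1 + 6 / nn * q) \<le> 1" using assms by linarith
  have "\<eta> * (\<eta> * (1 + 6 / nn * q)) \<le> \<eta> * 1" using h assms by (intro mult_left_mono) auto
  thus "(1-\<eta>)\<^sup>2 + 2*q*\<eta>\<^sup>2/nn + c*p \<le> 1 - \<eta>"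
    unfolding cp by (simp add: power2_eq_square field_simps)
  have "2*q*\<eta>\<^sup>2/nn = c * (p/2)" using cp by (simp add: field_simps)
  also have "\<dots> \<le> c * (p - \<eta>)"
    using assms by (intro mult_left_mono) (auto simp: c)
  finally have "2*q*\<eta>\<^sup>2/nn \<le> c * (p - \<eta>)" .
  hence "(2*q*\<eta>\<^sup>2/nn) / nn \<le> (c * (p - \<eta>)) / nn"
    using assms by (intro divide_right_mono) auto
  moreover have "(1-\<eta>)*c/nn - c*(1-p)/nn = c*(p-\<eta>)/nn" by (simp add: diff_divide_distrib[symmetric] algebra_simps)
  moreover have "2*q*\<eta>\<^sup>2/nn\<^sup>2 = (2*q*\<eta>\<^sup>2/nn)/nn" by (simp add: power2_eq_square)
  ultimately show "2*q*\<eta>\<^sup>2/nn\<^sup>2 + c*(1-p)/nn \<le> (1-\<eta>)*c/nn" by linarith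
qed

lemma sq_le2: "(a - b)\<^sup>2 \<le> 2 * a\<^sup>2 + 2 * (b::real)\<^sup>2"
proof -
  have "0 \<le> (a + b)\<^sup>2" by simp
  thus ?thesis by (simp add: power2_eq_square algebra_simps)
qed

definition ind :: "'d \<Rightarrow> 'd set \<Rightarrow> real" where "ind j A = (if j \<in> A then 1 else 0)"

lemma ind_sq[simp]: "ind j A * ind j A = ind j A" by (simp add: ind_def)
lemma ind_01: "ind j A = 0 \<or> ind j A = 1" by (simp add: ind_def)

lemma coord_step:
  fixes M :: "(nat \<Rightarrow> 'd set) pmf" and D :: "nat \<Rightarrow> real"
  assumes int: "\<And>f::(nat \<Rightarrow> 'd set)\<Rightarrow>real. integrable (measure_pmf M) f"
    and EX: "\<And>i. i < n \<Longrightarrow> measure_pmf.expectation M (\<lambda>T. ind j (T i)) = p"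
    and EXX: "\<And>i i'. i < n \<Longrightarrow> i' < n \<Longrightarrow> i \<noteq> i' \<Longrightarrow>
          measure_pmf.expectation M (\<lambda>T. ind j (T i) * ind j (T i')) = p\<^sup>2"
    and pr: "p * r = 1"
    and n1: "real n \<ge> 1" and eta: "\<eta> > 0" and r1: "r \<ge> 1" and p0: "p > 0" "p \<le> 1"
    and e1: "\<eta> * (1 + 8 / real n * (r - 1)) \<le> 1" and e2: "\<eta> \<le> p / 2"
    and c: "c = 4 * \<eta>\<^sup>2 * (r - 1) / (real n * p)"
  shows "measure_pmf.expectation M (\<lambda>T.
      ((1-\<eta>)*u + (\<Sum>i<n. (-(\<eta>/real n)*(D i - u)) * (1 - r * ind j (T i))))\<^sup>2
      + c / real n * (\<Sum>i<n. (ind j (T i) * u + (1 - ind j (T i)) * D i)\<^sup>2))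
    \<le> (1-\<eta>) * (u\<^sup>2 + c / real n * (\<Sum>i<n. (D i)\<^sup>2))"
proof -
  let ?E = "measure_pmf.expectation M"
  have E1: "?E (\<lambda>T. 1 - r * ind j (T i)) = 0" if "i < n" for i
    using EX[OF that] pr by (simp add: int Bochner_Integration.integral_diff mult.commute)
  have E2: "?E (\<lambda>T. (1 - r * ind j (T i)) * (1 - r * ind j (T i'))) = (if i = i' then r - 1 else 0)"
    if "i < n" "i' < n" for i i'
  proof (cases "i = i'")
    case True
    have "(\<lambda>T. (1 - r * ind j (T i)) * (1 - r * ind j (T i'))) = (\<lambda>T. 1 + (r*r - 2*r) * ind j (T i))"
      using True by (auto simp: algebra_simps fun_eq_iff)
    then show ?thesis using True EX[OF that(1)] pr
      by (simp add: int Bochner_Integration.integral_add algebra_simps)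
  next
    case False
    have "(\<lambda>T. (1 - r * ind j (T i)) * (1 - r * ind j (T i'))) =
       (\<lambda>T. 1 - r * ind j (T i) - r * ind j (T i') + (r * r) * (ind j (T i) * ind j (T i')))"
      by (auto simp: algebra_simps fun_eq_iff)
    then show ?thesis using False EX[OF that(1)] EX[OF that(2)] EXX[OF that False] pr
      by (simp add: int Bochner_Integration.integral_add Bochner_Integration.integral_diff
          power2_eq_square algebra_simps)
  qed
  have S1: "?E (\<lambda>T. ((1-\<eta>)*u + (\<Sum>i<n. (-(\<eta>/real n)*(D i - u)) * (1 - r * ind j (T i))))\<^sup>2)
     = ((1-\<eta>)*u)\<^sup>2 + (r - 1) * (\<Sum>i<n. (-(\<eta>/real n)*(D i - u))\<^sup>2)"
    by (rule sq_expect[OF int E1 E2])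
  have sqD: "(ind j A * u + (1 - ind j A) * d)\<^sup>2 = u\<^sup>2 + (d\<^sup>2 - u\<^sup>2) * (1 - ind j A)" for A d
    using ind_01[of j A] by (auto simp: power2_eq_square)
  have S2: "?E (\<lambda>T. (ind j (T i) * u + (1 - ind j (T i)) * D i)\<^sup>2) = p * u\<^sup>2 + (1 - p) * (D i)\<^sup>2"
    if "i < n" for i
    unfolding sqD using EX[OF that]
    by (simp add: int Bochner_Integration.integral_add Bochner_Integration.integral_diff algebra_simps)
  have "?E (\<lambda>T.
      ((1-\<eta>)*u + (\<Sum>i<n. (-(\<eta>/real n)*(D i - u)) * (1 - r * ind j (T i))))\<^sup>2
      + c / real n * (\<Sum>i<n. (ind j (T i) * u + (1 - ind j (T i)) * D i)\<^sup>2))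
    = ((1-\<eta>)*u)\<^sup>2 + (r - 1) * (\<Sum>i<n. (-(\<eta>/real n)*(D i - u))\<^sup>2)
       + c / real n * (\<Sum>i<n. p * u\<^sup>2 + (1 - p) * (D i)\<^sup>2)"
  proof -
    have "?E (\<lambda>T. (\<Sum>i<n. (ind j (T i) * u + (1 - ind j (T i)) * D i)\<^sup>2))
        = (\<Sum>i<n. ?E (\<lambda>T. (ind j (T i) * u + (1 - ind j (T i)) * D i)\<^sup>2))"
      by (rule Bochner_Integration.integral_sum) (rule int)
    also have "\<dots> = (\<Sum>i<n. p * u\<^sup>2 + (1 - p) * (D i)\<^sup>2)"
      by (rule sum.cong) (auto simp: S2)
    finally have B: "?E (\<lambda>T. (\<Sum>i<n. (ind j (T i) * u + (1 - ind j (T i)) * D i)\<^sup>2))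
        = (\<Sum>i<n. p * u\<^sup>2 + (1 - p) * (D i)\<^sup>2)" .
    show ?thesis
      apply (subst Bochner_Integration.integral_add[OF int int])
      apply (subst integral_mult_right_zero)
      apply (subst S1)
      apply (subst B)
      ..
  qed
  also have "\<dots> \<le> (1-\<eta>) * (u\<^sup>2 + c / real n * (\<Sum>i<n. (D i)\<^sup>2))"
  proof -
    define S where "S = (\<Sum>i<n. (D i)\<^sup>2)"
    define U where "U = u\<^sup>2"
    have S0: "S \<ge> 0" "U \<ge> 0" unfolding S_def U_def by (auto intro: sum_nonneg)
    have "(\<Sum>i<n. (-(\<eta>/real n)*(D i - u))\<^sup>2) = (\<eta>/real n)\<^sup>2 * (\<Sum>i<n. (D i - u)\<^sup>2)"
      by (simp add: sum_distrib_left power_mult_distrib power_divide)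
    also have "\<dots> \<le> (\<eta>/real n)\<^sup>2 * (\<Sum>i<n. 2 * (D i)\<^sup>2 + 2 * u\<^sup>2)"
      by (intro mult_left_mono sum_mono sq_le2) auto
    also have "\<dots> = (\<eta>/real n)\<^sup>2 * (2 * S + 2 * real n * U)"
      by (simp add: S_def U_def sum.distrib sum_distrib_left[symmetric])
    finally have A: "(\<Sum>i<n. (-(\<eta>/real n)*(D i - u))\<^sup>2) \<le> (\<eta>/real n)\<^sup>2 * (2 * S + 2 * real n * U)" .
    have B: "(\<Sum>i<n. p * u\<^sup>2 + (1 - p) * (D i)\<^sup>2) = real n * p * U + (1-p) * S"
      by (simp add: S_def U_def sum.distrib sum_distrib_left[symmetric])
    have C1: "(1-\<eta>)\<^sup>2 + 2*(r-1)*\<eta>\<^sup>2/real n + c*p \<le> 1 - \<eta>"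
     and C2: "2*(r-1)*\<eta>\<^sup>2/(real n)\<^sup>2 + c*(1-p)/real n \<le> (1-\<eta>)*c/real n"
      using coef_ineq[of "real n" \<eta> "r-1" p c] n1 eta r1 p0 e1 e2 c by auto
    have c0: "c \<ge> 0" using c r1 p0 n1 by auto
    have "((1-\<eta>)*u)\<^sup>2 + (r - 1) * (\<Sum>i<n. (-(\<eta>/real n)*(D i - u))\<^sup>2)
       + c / real n * (\<Sum>i<n. p * u\<^sup>2 + (1 - p) * (D i)\<^sup>2)
       \<le> ((1-\<eta>)*u)\<^sup>2 + (r - 1) * ((\<eta>/real n)\<^sup>2 * (2 * S + 2 * real n * U))
       + c / real n * (real n * p * U + (1-p) * S)"
      using A r1 c0 p0 n1 unfolding B by (intro add_mono mult_left_mono) auto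
    also have "\<dots> = ((1-\<eta>)\<^sup>2 + 2*(r-1)*\<eta>\<^sup>2/real n + c*p) * U
          + (2*(r-1)*\<eta>\<^sup>2/(real n)\<^sup>2 + c*(1-p)/real n) * S"
      using n1 by (simp add: U_def power2_eq_square field_simps)
    also have "\<dots> \<le> (1 - \<eta>) * U + ((1-\<eta>)*c/real n) * S"
      using C1 C2 S0 by (intro add_mono mult_right_mono) auto
    also have "\<dots> = (1-\<eta>) * (u\<^sup>2 + c / real n * (\<Sum>i<n. (D i)\<^sup>2))"
      by (simp add: U_def S_def algebra_simps)
    finally show ?thesis .
  qed
  finally show ?thesis .
qed

definition stepw :: "nat \<Rightarrow> nat \<Rightarrow> (nat \<Rightarrow> real^'d) \<Rightarrow> real \<Rightarrow> real^'d \<Rightarrow> (nat \<Rightarrow> real^'d)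
     \<Rightarrow> (nat \<Rightarrow> 'd set) \<Rightarrow> real^'d" where
  "stepw n k e \<eta> w b T = w - \<eta> *\<^sub>R ((1 / real n) *\<^sub>R (\<Sum>i<n. \<chi> j. if j \<in> T i
                          then b i $ j + (real CARD('d) / real k) * (gradF e i w $ j - b i $ j)
                          else b i $ j))"

definition stepb :: "(nat \<Rightarrow> real^'d) \<Rightarrow> real^'d \<Rightarrow> (nat \<Rightarrow> real^'d)
     \<Rightarrow> (nat \<Rightarrow> 'd set) \<Rightarrow> nat \<Rightarrow> real^'d" where
  "stepb e w b T = (\<lambda>i. \<chi> j. if j \<in> T i then gradF e i w $ j else b i $ j)"

lemma traj_Suc': "traj n k e \<eta> w0 S (Suc t) =
   (stepw n k e \<eta> (fst (traj n k e \<eta> w0 S t)) (snd (traj n k e \<eta> w0 S t)) (\<lambda>i. S (t, i)),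
    stepb e (fst (traj n k e \<eta> w0 S t)) (snd (traj n k e \<eta> w0 S t)) (\<lambda>i. S (t, i)))"
  by (simp add: Let_def stepw_def stepb_def)

definition Phi :: "nat \<Rightarrow> (nat \<Rightarrow> real^'d) \<Rightarrow> real \<Rightarrow> real^'d \<Rightarrow> (nat \<Rightarrow> real^'d) \<Rightarrow> real" where
  "Phi n e c w b = (norm (w - wstar n e))\<^sup>2
      + c / real n * (\<Sum>i<n. (norm (b i - gradF e i (wstar n e)))\<^sup>2)"

lemma norm_sq_coord: "(norm (v :: real^'d))\<^sup>2 = (\<Sum>j\<in>UNIV. (v $ j)\<^sup>2)"
  unfolding power2_norm_eq_inner inner_vec_def by (simp add: power2_eq_square)

lemma Phi_coord: "Phi n e c w b = (\<Sum>j\<in>UNIV. (w $ j - wstar n e $ j)\<^sup>2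
      + c / real n * (\<Sum>i<n. (b i $ j - gradF e i (wstar n e) $ j)\<^sup>2))"
  unfolding Phi_def norm_sq_coord
  by (simp add: sum.distrib sum_distrib_left sum.swap[of _ UNIV "{..<_}"])

lemma stepw_coord:
  fixes w :: "real^'d" and T :: "nat \<Rightarrow> 'd set"
  assumes n: "n \<ge> 1"
  shows "stepw n k e \<eta> w b T $ j - wstar n e $ j =
     (1-\<eta>)*(w $ j - wstar n e $ j) + (\<Sum>i<n. (-(\<eta>/real n)*((b i $ j - gradF e i (wstar n e) $ j)
        - (w $ j - wstar n e $ j))) * (1 - (real CARD('d) / real k) * ind j (T i)))"
proof -
  let ?r = "real CARD('d) / real k"
  let ?u = "w $ j - wstar n e $ j"
  have ws: "real n * wstar n e $ j = (\<Sum>i<n. e i $ j)"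
    using n by (simp add: wstar_def sum_component)
  have h: "(if j \<in> T i then b i $ j + ?r * (gradF e i w $ j - b i $ j) else b i $ j)
      = (gradF e i w $ j) + (1 - ?r * ind j (T i)) * ((b i $ j - gradF e i (wstar n e) $ j) - ?u)" for i
  proof -
    have "(b i $ j - gradF e i (wstar n e) $ j) - ?u = b i $ j - gradF e i w $ j"
      by (simp add: gradF_def)
    moreover have "(if P then bb + rr*(x - bb) else bb) = x + (1 - rr * (if P then 1 else 0)) * (bb - x)"
      for P and bb rr x :: real
      by (cases P) (simp_all add: algebra_simps)
    ultimately show ?thesis unfolding ind_def by simp
  qed
  have sx: "(\<Sum>i<n. gradF e i w $ j) = real n * ?u"
    using ws by (simp add: gradF_def sum_subtractf algebra_simps)
  have "stepw n k e \<eta> w b T $ j = w $ j - \<eta> * (1 / real n) * (\<Sum>i<n. (gradF e i w $ j)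
      + (1 - ?r * ind j (T i)) * ((b i $ j - gradF e i (wstar n e) $ j) - ?u))"
    unfolding stepw_def by (simp add: sum_component h)
  also have "\<dots> = w $ j - \<eta> * (1 / real n) * (real n * ?u + (\<Sum>i<n. 
      (1 - ?r * ind j (T i)) * ((b i $ j - gradF e i (wstar n e) $ j) - ?u)))"
    by (simp add: sum.distrib sx)
  finally have st: "stepw n k e \<eta> w b T $ j = w $ j - \<eta> * (1 / real n) * (real n * ?u + (\<Sum>i<n. 
      (1 - ?r * ind j (T i)) * ((b i $ j - gradF e i (wstar n e) $ j) - ?u)))" .
  have ss: "(\<Sum>i<n. (-(\<eta>/real n)*((b i $ j - gradF e i (wstar n e) $ j)
        - ?u)) * (1 - ?r * ind j (T i))) = -(\<eta>/real n) * (\<Sum>i<n. 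
      (1 - ?r * ind j (T i)) * ((b i $ j - gradF e i (wstar n e) $ j) - ?u))"
    by (simp add: sum_distrib_left mult_ac)
  show ?thesis unfolding ss st using n by (simp add: field_simps)
qed

lemma stepb_coord:
  "stepb e w b T i $ j - gradF e i (wstar n e) $ j =
     ind j (T i) * (w $ j - wstar n e $ j) + (1 - ind j (T i)) * (b i $ j - gradF e i (wstar n e) $ j)"
  by (simp add: stepb_def ind_def gradF_def)

lemma vec_step:
  fixes M :: "(nat \<Rightarrow> 'd::finite set) pmf" and w :: "real^'d"
  assumes fin: "finite (set_pmf M)"
    and EX: "\<And>i j. i < n \<Longrightarrow> measure_pmf.expectation M (\<lambda>T. ind j (T i)) = p"
    and EXX: "\<And>i i' j. i < n \<Longrightarrow> i' < n \<Longrightarrow> i \<noteq> i' \<Longrightarrow>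
          measure_pmf.expectation M (\<lambda>T. ind j (T i) * ind j (T i')) = p\<^sup>2"
    and pr: "p * (real CARD('d) / real k) = 1"
    and n1: "n \<ge> 1" and eta: "\<eta> > 0" and r1: "real CARD('d) / real k \<ge> 1" and p0: "p > 0" "p \<le> 1"
    and e1: "\<eta> * (1 + 8 / real n * (real CARD('d) / real k - 1)) \<le> 1" and e2: "\<eta> \<le> p / 2"
    and c: "c = 4 * \<eta>\<^sup>2 * (real CARD('d) / real k - 1) / (real n * p)"
  shows "measure_pmf.expectation M (\<lambda>T. Phi n e c (stepw n k e \<eta> w b T) (stepb e w b T))
     \<le> (1 - \<eta>) * Phi n e c w b"
proof -
  have int: "\<And>f::(nat \<Rightarrow> 'd set)\<Rightarrow>real. integrable (measure_pmf M) f"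
    using fin by (rule integrable_measure_pmf_finite)
  let ?ws = "wstar n e"
  let ?r = "real CARD('d) / real k"
  let ?F = "\<lambda>j T. ((1-\<eta>)*(w $ j - ?ws $ j) + (\<Sum>i<n. (-(\<eta>/real n)*((b i $ j - gradF e i ?ws $ j)
        - (w $ j - ?ws $ j))) * (1 - ?r * ind j (T i))))\<^sup>2
      + c / real n * (\<Sum>i<n. (ind j (T i) * (w $ j - ?ws $ j) + (1 - ind j (T i)) * (b i $ j - gradF e i ?ws $ j))\<^sup>2)"
  have eq: "Phi n e c (stepw n k e \<eta> w b T) (stepb e w b T) = (\<Sum>j\<in>UNIV. ?F j T)" for T
    unfolding Phi_coord stepw_coord[OF n1] stepb_coord ..
  have "measure_pmf.expectation M (\<lambda>T. Phi n e c (stepw n k e \<eta> w b T) (stepb e w b T))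
      = (\<Sum>j\<in>UNIV. measure_pmf.expectation M (?F j))"
    unfolding eq by (rule Bochner_Integration.integral_sum) (rule int)
  also have "\<dots> \<le> (\<Sum>j\<in>UNIV. (1-\<eta>) * ((w $ j - ?ws $ j)\<^sup>2 + c / real n * (\<Sum>i<n. (b i $ j - gradF e i ?ws $ j)\<^sup>2)))"
  proof (rule sum_mono)
    fix j :: 'd
    show "measure_pmf.expectation M (?F j) \<le> (1-\<eta>) * ((w $ j - ?ws $ j)\<^sup>2 + c / real n * (\<Sum>i<n. (b i $ j - gradF e i ?ws $ j)\<^sup>2))"
      by (rule coord_step[OF int EX EXX pr _ eta r1 p0 e1 e2 c]) (use n1 in auto)
  qed
  also have "\<dots> = (1 - \<eta>) * Phi n e c w b"
    unfolding Phi_coord by (simp add: sum_distrib_left)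
  finally show ?thesis .
qed

lemma ksubsets_finite: "finite (ksubsets k :: 'd::finite set set)"
  by simp

lemma ksubsets_nonempty:
  assumes "k \<le> CARD('d::finite)"
  shows "ksubsets k \<noteq> ({} :: 'd set set)"
proof -
  obtain B :: "'d set" where "B \<subseteq> UNIV" "card B = k"
    using assms by (meson obtain_subset_with_card_n)
  thus ?thesis unfolding ksubsets_def by auto
qed

lemma card_ksubsets: "card (ksubsets k :: 'd::finite set set) = CARD('d) choose k"
proof -
  have "ksubsets k = {B :: 'd set. B \<subseteq> UNIV \<and> card B = k}" unfolding ksubsets_def by auto
  thus ?thesis using n_subsets[of "UNIV :: 'd set" k] by simp
qed

lemma card_ksubsets_j:
  assumes "k \<ge> 1"
  shows "card {A \<in> ksubsets k. (j::'d::finite) \<in> A} = (CARD('d) - 1) choose (k - 1)"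
proof -
  have eq: "{A \<in> ksubsets k. j \<in> A} = insert j ` {B. B \<subseteq> UNIV - {j} \<and> card B = k - 1}"
  proof (intro equalityI subsetI)
    fix A assume "A \<in> {A \<in> ksubsets k. j \<in> A}"
    hence A: "card A = k" "j \<in> A" unfolding ksubsets_def by auto
    hence "A - {j} \<in> {B. B \<subseteq> UNIV - {j} \<and> card B = k - 1}" by auto
    moreover have "A = insert j (A - {j})" using A by auto
    ultimately show "A \<in> insert j ` {B. B \<subseteq> UNIV - {j} \<and> card B = k - 1}" by blast
  next
    fix A assume "A \<in> insert j ` {B. B \<subseteq> UNIV - {j} \<and> card B = k - 1}"
    then obtain B where B: "B \<subseteq> UNIV - {j}" "card B = k - 1" "A = insert j B" by auto
    have "j \<notin> B" using B by auto
    hence "card A = k" using B assms by (simp add: card_insert_if)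
    thus "A \<in> {A \<in> ksubsets k. j \<in> A}" using B unfolding ksubsets_def by auto
  qed
  have inj: "inj_on (insert j) {B. B \<subseteq> UNIV - {j} \<and> card B = k - 1}"
    by (rule inj_onI) (auto simp: insert_ident)
  have "card {A \<in> ksubsets k. j \<in> A} = card {B :: 'd set. B \<subseteq> UNIV - {j} \<and> card B = k - 1}"
    unfolding eq by (rule card_image[OF inj])
  also have "\<dots> = card (UNIV - {j} :: 'd set) choose (k - 1)" by (rule n_subsets) simp
  also have "card (UNIV - {j} :: 'd set) = CARD('d) - 1" by (simp add: card_Diff_singleton)
  finally show ?thesis .
qed

lemma expect_ind:
  assumes "1 \<le> k" "k \<le> CARD('d::finite)"
  shows "measure_pmf.expectation (pmf_of_set (ksubsets k :: 'd set set)) (ind j)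
        = real k / real CARD('d)"
proof -
  have s: "sum (ind j) (ksubsets k) = real (card {A \<in> ksubsets k. j \<in> A})"
    unfolding ind_def by (simp add: sum.If_cases[OF ksubsets_finite] Int_def)
  obtain d' where d': "CARD('d) = Suc d'" using assms by (cases "CARD('d)") auto
  obtain k' where k': "k = Suc k'" using assms by (cases k) auto
  have bin: "real (Suc d') * real (d' choose k') = real (Suc d' choose Suc k') * real (Suc k')"
    using Suc_times_binomial_eq[of d' k'] by (metis of_nat_mult)
  have pos: "(Suc d' choose Suc k') > 0" using assms d' k' by (simp add: zero_less_binomial_iff)
  have "measure_pmf.expectation (pmf_of_set (ksubsets k :: 'd set set)) (ind j)
     = sum (ind j) (ksubsets k) / real (card (ksubsets k :: 'd set set))"
    by (rule integral_pmf_of_set[OF ksubsets_nonempty[OF assms(2)] ksubsets_finite])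
  also have "\<dots> = real ((CARD('d) - 1) choose (k - 1)) / real (CARD('d) choose k)"
    by (simp only: s card_ksubsets_j[OF assms(1)] card_ksubsets)
  also have "\<dots> = real (d' choose k') / real (Suc d' choose Suc k')"
    by (simp add: d' k' del: binomial_Suc_Suc)
  also have "\<dots> = real (Suc k') / real (Suc d')"
    using bin pos by (simp add: field_simps del: binomial_Suc_Suc of_nat_Suc)
  finally show ?thesis using d' k' by simp
qed

lemma round_facts:
  fixes m n :: nat
  assumes k1: "1 \<le> k" and kd: "k \<le> CARD('d::finite)"
  defines "R \<equiv> Pi_pmf ({m}\<times>{..<n}) undefined (\<lambda>_. pmf_of_set (ksubsets k :: 'd set set))"
  defines "M \<equiv> map_pmf (\<lambda>R i. R (m, i)) R"
  shows "finite (set_pmf M)"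
    and "\<And>i j. i < n \<Longrightarrow> measure_pmf.expectation M (\<lambda>T. ind j (T i)) = real k / real CARD('d)"
    and "\<And>i i' j. i < n \<Longrightarrow> i' < n \<Longrightarrow> i \<noteq> i' \<Longrightarrow>
          measure_pmf.expectation M (\<lambda>T. ind j (T i) * ind j (T i')) = (real k / real CARD('d))\<^sup>2"
proof -
  let ?K = "ksubsets k :: 'd set set"
  let ?Q = "pmf_of_set ?K"
  have setQ: "set_pmf ?Q = ?K" using ksubsets_nonempty[OF kd] by simp
  have finR: "finite (set_pmf R)" unfolding R_def
    by (subst set_Pi_pmf) (auto simp: setQ intro!: finite_PiE_dflt)
  thus "finite (set_pmf M)" unfolding M_def by simp
  fix i i' :: nat and j :: 'd
  assume i: "i < n"
  have comp: "map_pmf (\<lambda>f. f x) R = ?Q" if "x \<in> {m}\<times>{..<n}" for x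
    using that unfolding R_def by (subst Pi_pmf_component) auto
  show "measure_pmf.expectation M (\<lambda>T. ind j (T i)) = real k / real CARD('d)"
  proof -
    have "measure_pmf.expectation M (\<lambda>T. ind j (T i)) = measure_pmf.expectation (map_pmf (\<lambda>f. f (m,i)) R) (ind j)"
      unfolding M_def by simp
    also have "\<dots> = real k / real CARD('d)" using i comp[of "(m,i)"] expect_ind[OF k1 kd] by simp
    finally show ?thesis .
  qed
  assume i': "i' < n" and ne: "i \<noteq> i'"
  define f where "f x A = (if x = (m,i) \<or> x = (m,i') then ind j A else 1)" for x A
  have fin: "finite ({m}\<times>{..<n})" by simp
  have fi: "f (m,i) = ind j" "f (m,i') = ind j" by (auto simp: f_def fun_eq_iff)
  have fx: "\<And>x. x \<noteq> (m,i) \<Longrightarrow> x \<noteq> (m,i') \<Longrightarrow> f x = (\<lambda>_. 1)" by (auto simp: f_def fun_eq_iff)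
  have pr: "(\<Prod>x\<in>{m}\<times>{..<n}. f x (h x)) = ind j (h (m,i)) * ind j (h (m,i'))" for h :: "nat\<times>nat \<Rightarrow> 'd set"
  proof -
    have "(\<Prod>x\<in>{m}\<times>{..<n}. f x (h x)) = (\<Prod>x\<in>{(m,i),(m,i')}. f x (h x))"
      by (rule prod.mono_neutral_right) (use i i' in \<open>auto simp: f_def\<close>)
    also have "\<dots> = ind j (h (m,i)) * ind j (h (m,i'))" using ne by (simp add: f_def)
    finally show ?thesis .
  qed
  have pe: "(\<Prod>x\<in>{m}\<times>{..<n}. measure_pmf.expectation ?Q (f x)) = (real k / real CARD('d))\<^sup>2"
  proof -
    have "(\<Prod>x\<in>{m}\<times>{..<n}. measure_pmf.expectation ?Q (f x)) = (\<Prod>x\<in>{(m,i),(m,i')}. measure_pmf.expectation ?Q (f x))"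
      by (rule prod.mono_neutral_right) (use i i' in \<open>auto simp: fx\<close>)
    also have "\<dots> = (real k / real CARD('d))\<^sup>2" using ne expect_ind[OF k1 kd]
      by (simp add: fi power2_eq_square)
    finally show ?thesis .
  qed
  have "measure_pmf.expectation M (\<lambda>T. ind j (T i) * ind j (T i'))
      = measure_pmf.expectation R (\<lambda>h. \<Prod>x\<in>{m}\<times>{..<n}. f x (h x))"
    unfolding M_def pr by simp
  also have "\<dots> = (\<Prod>x\<in>{m}\<times>{..<n}. measure_pmf.expectation ?Q (f x))"
    unfolding R_def
    by (rule expectation_prod_Pi_pmf[OF fin]) (auto simp: f_def ind_def setQ intro!: integrable_measure_pmf_finite)
  finally show "measure_pmf.expectation M (\<lambda>T. ind j (T i) * ind j (T i')) = (real k / real CARD('d))\<^sup>2"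
    using pe by simp
qed

lemma stepw_cong:
  assumes "\<And>i. i < n \<Longrightarrow> b i = b' i" "\<And>i. i < n \<Longrightarrow> T i = T' i"
  shows "stepw n k e \<eta> w b T = stepw n k e \<eta> w b' T'"
proof -
  have "(\<Sum>i<n. (\<chi> j. if j \<in> T i then b i $ j + (real CARD('a) / real k) * (gradF e i w $ j - b i $ j) else b i $ j) :: real^'a)
      = (\<Sum>i<n. \<chi> j. if j \<in> T' i then b' i $ j + (real CARD('a) / real k) * (gradF e i w $ j - b' i $ j) else b' i $ j)"
    by (rule sum.cong) (use assms in auto)
  thus ?thesis unfolding stepw_def by simp
qed

lemma Phi_cong:
  assumes "\<And>i. i < n \<Longrightarrow> b i = b' i"
  shows "Phi n e c w b = Phi n e c w b'"
proof -
  have "(\<Sum>i<n. (norm (b i - gradF e i (wstar n e)))\<^sup>2) = (\<Sum>i<n. (norm (b' i - gradF e i (wstar n e)))\<^sup>2)"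
    by (rule sum.cong) (use assms in auto)
  thus ?thesis unfolding Phi_def by simp
qed

lemma traj_local:
  "(\<And>t' i. t' < t \<Longrightarrow> i < n \<Longrightarrow> S (t',i) = S' (t',i)) \<Longrightarrow>
    fst (traj n k e \<eta> w0 S t) = fst (traj n k e \<eta> w0 S' t) \<and>
    (\<forall>i<n. snd (traj n k e \<eta> w0 S t) i = snd (traj n k e \<eta> w0 S' t) i)"
proof (induction t)
  case 0
  then show ?case by simp
next
  case (Suc t)
  have IH: "fst (traj n k e \<eta> w0 S t) = fst (traj n k e \<eta> w0 S' t)"
     "\<And>i. i < n \<Longrightarrow> snd (traj n k e \<eta> w0 S t) i = snd (traj n k e \<eta> w0 S' t) i"
    using Suc.IH Suc.prems by auto
  have T: "\<And>i. i < n \<Longrightarrow> S (t, i) = S' (t, i)" using Suc.prems by auto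
  show ?case
    unfolding traj_Suc' using IH T
    by (auto intro!: stepw_cong simp: stepb_def)
qed

lemma main_ind:
  fixes e :: "nat \<Rightarrow> real^'d::finite" and w0 :: "real^'d"
  assumes k1: "1 \<le> k" and kd: "k \<le> CARD('d)" and n1: "n \<ge> 1" and eta: "\<eta> > 0"
    and e1: "\<eta> * (1 + 8 / real n * (real CARD('d) / real k - 1)) \<le> 1"
    and e2: "\<eta> \<le> (real k / real CARD('d)) / 2"
    and c: "c = 4 * \<eta>\<^sup>2 * (real CARD('d) / real k - 1) / (real n * (real k / real CARD('d)))"
  shows "measure_pmf.expectation (Pi_pmf ({..<m}\<times>{..<n}) undefined (\<lambda>_. pmf_of_set (ksubsets k :: 'd set set)))
     (\<lambda>S. Phi n e c (fst (traj n k e \<eta> w0 S m)) (snd (traj n k e \<eta> w0 S m)))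
    \<le> (1 - \<eta>) ^ m * Phi n e c w0 (\<lambda>_. 0)"
proof (induction m)
  case 0
  then show ?case by simp
next
  case (Suc m)
  let ?Q = "pmf_of_set (ksubsets k :: 'd set set)"
  define P where "P (m::nat) = Pi_pmf ({..<m}\<times>{..<n}) undefined (\<lambda>_. ?Q)" for m
  define R where "R = Pi_pmf ({m}\<times>{..<n}) undefined (\<lambda>_. ?Q)"
  define M where "M = map_pmf (\<lambda>R i. R (m, i)) R"
  define A where "A = {..<m}\<times>{..<n}"
  define mrg where "mrg = (\<lambda>(f,g) x. if x \<in> A then f x else (g x :: 'd set))"
  define G where "G m S = Phi n e c (fst (traj n k e \<eta> w0 S m)) (snd (traj n k e \<eta> w0 S m))" for m S
  define H where "H S T = Phi n e c (stepw n k e \<eta> (fst (traj n k e \<eta> w0 S m)) (snd (traj n k e \<eta> w0 S m)) T)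
      (stepb e (fst (traj n k e \<eta> w0 S m)) (snd (traj n k e \<eta> w0 S m)) T)" for S T
  have RF: "finite (set_pmf M)"
      "\<And>i j. i < n \<Longrightarrow> measure_pmf.expectation M (\<lambda>T. ind j (T i)) = real k / real CARD('d)"
      "\<And>i i' j. i < n \<Longrightarrow> i' < n \<Longrightarrow> i \<noteq> i' \<Longrightarrow>
          measure_pmf.expectation M (\<lambda>T. ind j (T i) * ind j (T i')) = (real k / real CARD('d))\<^sup>2"
    unfolding M_def R_def using round_facts[OF k1 kd] by blast+
  have d0: "real CARD('d) > 0" by simp
  have kpos: "real k > 0" using k1 by simp
  have pr: "real k / real CARD('d) * (real CARD('d) / real k) = 1" using d0 kpos by simp
  have r1: "real CARD('d) / real k \<ge> 1" using kd kpos by simp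
  have p0: "real k / real CARD('d) > 0" "real k / real CARD('d) \<le> 1" using kd kpos d0 by auto
  have step: "measure_pmf.expectation M (H S) \<le> (1 - \<eta>) * G m S" for S
    unfolding H_def G_def
    by (rule vec_step[OF RF pr n1 eta r1 p0 e1 e2 c])
  have finQ: "finite (set_pmf ?Q)" using ksubsets_nonempty[OF kd] by simp
  have finP: "finite (set_pmf (P m'))" for m' :: nat
  proof -
    have "finite ({..<m'}\<times>{..<n})" by simp
    thus ?thesis unfolding P_def by (subst set_Pi_pmf) (auto intro!: finite_PiE_dflt simp: finQ[simplified])
  qed
  have finR: "finite (set_pmf R)"
    unfolding R_def by (subst set_Pi_pmf) (auto intro!: finite_PiE_dflt finite_cartesian_product simp: finQ[simplified])
  have dom: "{..<Suc m}\<times>{..<n} = A \<union> {m}\<times>{..<n}" unfolding A_def by auto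
  have PS: "P (Suc m) = map_pmf mrg (pair_pmf (P m) R)"
    unfolding P_def R_def dom mrg_def A_def
    by (rule Pi_pmf_union) auto
  have pair: "pair_pmf (P m) R = bind_pmf (P m) (\<lambda>S. map_pmf (Pair S) R)"
    by (simp add: pair_pmf_def map_pmf_def)
  have GH: "G (Suc m) (mrg (S, T)) = H S (\<lambda>i. T (m, i))" for S T
  proof -
    have loc: "fst (traj n k e \<eta> w0 (mrg (S, T)) m) = fst (traj n k e \<eta> w0 S m) \<and>
      (\<forall>i<n. snd (traj n k e \<eta> w0 (mrg (S, T)) m) i = snd (traj n k e \<eta> w0 S m) i)"
      by (rule traj_local) (auto simp: mrg_def A_def)
    have mm: "(\<lambda>i. mrg (S, T) (m, i)) = (\<lambda>i. T (m, i))" by (auto simp: mrg_def A_def)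
    have "G (Suc m) (mrg (S, T)) = Phi n e c
       (stepw n k e \<eta> (fst (traj n k e \<eta> w0 S m)) (snd (traj n k e \<eta> w0 (mrg (S, T)) m)) (\<lambda>i. T (m, i)))
       (stepb e (fst (traj n k e \<eta> w0 S m)) (snd (traj n k e \<eta> w0 (mrg (S, T)) m)) (\<lambda>i. T (m, i)))"
      unfolding G_def traj_Suc' mm using loc by simp
    also have "\<dots> = H S (\<lambda>i. T (m, i))"
      unfolding H_def
      by (rule trans[OF arg_cong2[where f="Phi n e c", OF stepw_cong refl] Phi_cong])
         (use loc in \<open>auto simp: stepb_def\<close>)
    finally show ?thesis .
  qed
  have "measure_pmf.expectation (P (Suc m)) (G (Suc m))
      = measure_pmf.expectation (pair_pmf (P m) R) (\<lambda>z. G (Suc m) (mrg z))"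
    unfolding PS by simp
  also have "\<dots> = (\<Sum>S\<in>set_pmf (P m). pmf (P m) S *\<^sub>R
        measure_pmf.expectation (map_pmf (Pair S) R) (\<lambda>z. G (Suc m) (mrg z)))"
    unfolding pair by (rule pmf_expectation_bind) (auto simp: finP finR)
  also have "\<dots> = (\<Sum>S\<in>set_pmf (P m). pmf (P m) S * measure_pmf.expectation M (H S))"
    by (simp add: GH M_def)
  also have "\<dots> \<le> (\<Sum>S\<in>set_pmf (P m). pmf (P m) S * ((1 - \<eta>) * G m S))"
    by (intro sum_mono mult_left_mono step) auto
  also have "\<dots> = (1 - \<eta>) * measure_pmf.expectation (P m) (G m)"
    by (subst integral_measure_pmf[OF finP[of m]]) (auto simp: sum_distrib_left mult_ac)
  also have "\<dots> \<le> (1 - \<eta>) * ((1 - \<eta>) ^ m * Phi n e c w0 (\<lambda>_. 0))"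
  proof -
    have "real k / real CARD('d) / 2 \<le> 1" using p0(2) by (simp add: divide_le_eq)
    hence eta1: "\<eta> \<le> 1" using e2 by linarith
    have "G m = (\<lambda>S. Phi n e c (fst (traj n k e \<eta> w0 S m)) (snd (traj n k e \<eta> w0 S m)))"
      by (simp add: fun_eq_iff G_def)
    thus ?thesis using Suc.IH eta1 by (intro mult_left_mono) (auto simp: P_def)
  qed
  finally have X: "measure_pmf.expectation (P (Suc m)) (G (Suc m)) \<le> (1 - \<eta>) * ((1 - \<eta>) ^ m * Phi n e c w0 (\<lambda>_. 0))" .
  have GS: "G (Suc m) = (\<lambda>S. Phi n e c (fst (traj n k e \<eta> w0 S (Suc m))) (snd (traj n k e \<eta> w0 S (Suc m))))"
    by (rule ext) (simp only: G_def)
  show ?case using X unfolding GS P_def by (simp only: power_Suc mult.assoc)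
qed

lemma Phi_ge: "c \<ge> 0 \<Longrightarrow> (norm (w - wstar n e))\<^sup>2 \<le> Phi n e c w b"
  unfolding Phi_def by (auto intro!: sum_nonneg divide_nonneg_nonneg mult_nonneg_nonneg)

lemma Omega_eq: "Omega n k t = PiE_dflt ({..<Suc t}\<times>{..<n}) undefined (\<lambda>_. ksubsets k)"
  unfolding Omega_def PiE_dflt_def PiE_def Pi_def extensional_def
  by (auto simp: lessThan_Suc_atMost)

theorem theorem4:
  fixes e :: "nat \<Rightarrow> real^'d::finite" and w0 :: "real^'d"
    and n k :: nat and \<eta> :: real
  assumes "n \<ge> 1" and "1 \<le> k" and "k \<le> CARD('d)" and "\<eta> > 0"
    and "\<eta> \<le> min (1 / (1 + (8 / real n) * (real CARD('d) / real k - 1)))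
                  ((real k / real CARD('d)) / 2)"
  shows "\<forall>t::nat.
    measure_pmf.expectation (pmf_of_set (Omega n k t :: (nat \<times> nat \<Rightarrow> 'd set) set))
      (\<lambda>S. (norm (fst (traj n k e \<eta> w0 S (Suc t)) - wstar n e))\<^sup>2)
    \<le> (1 - \<eta>) ^ (t + 1) *
       ((norm (w0 - wstar n e))\<^sup>2 + (1 / real n) * (\<Sum>i<n. (norm (gradF e i (wstar n e)))\<^sup>2))"
proof
  fix t :: nat
  note n1 = assms(1) and k1 = assms(2) and kd = assms(3) and eta = assms(4)
  define p where "p = real k / real CARD('d)"
  define r where "r = real CARD('d) / real k"
  define c where "c = 4 * \<eta>\<^sup>2 * (real CARD('d) / real k - 1) / (real n * (real k / real CARD('d)))"
  have kpos: "real k > 0" using k1 by simp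
  have d0: "real CARD('d) > 0" by simp
  have r1: "r \<ge> 1" unfolding r_def using kd kpos by simp
  have p0: "p > 0" "p \<le> 1" unfolding p_def using kd kpos d0 by auto
  have pr: "p * r = 1" unfolding p_def r_def using kpos d0 by simp
  have X: "1 + (8 / real n) * (r - 1) \<ge> 1" using r1 by simp
  have e1: "\<eta> * (1 + 8 / real n * (real CARD('d) / real k - 1)) \<le> 1"
  proof -
    define Y where "Y = 1 + (8 / real n) * (r - 1)"
    have "\<eta> \<le> 1 / Y" using assms(5) unfolding r_def Y_def by simp
    hence "\<eta> * Y \<le> (1 / Y) * Y" using X unfolding Y_def by (intro mult_right_mono) auto
    hence "\<eta> * Y \<le> 1" using X unfolding Y_def by simp
    thus ?thesis unfolding Y_def r_def by simp
  qed
  have e2: "\<eta> \<le> (real k / real CARD('d)) / 2" using assms(5) by simp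
  have c0: "c \<ge> 0" unfolding c_def using r1 kpos d0 by (simp add: r_def)
  have c1: "c \<le> 1"
  proof -
    have "\<eta>\<^sup>2 \<le> (p/2)\<^sup>2" using e2 eta unfolding p_def by (intro power_mono) auto
    have c': "c = 4 * \<eta>\<^sup>2 * (r - 1) / (real n * p)" unfolding c_def p_def r_def ..
    have "c \<le> 4 * (p/2)\<^sup>2 * (r - 1) / (real n * p)"
      unfolding c' using r1 p0 n1 \<open>\<eta>\<^sup>2 \<le> (p/2)\<^sup>2\<close>
      by (intro divide_right_mono mult_right_mono) auto
    also have "\<dots> = p * (r - 1) / real n" using p0 n1 by (simp add: power2_eq_square field_simps)
    also have "p * (r - 1) = 1 - p" using pr by (simp add: algebra_simps)
    also have "(1 - p) / real n \<le> 1" using p0 n1 by (simp add: divide_le_eq)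
    finally show ?thesis .
  qed
  let ?Q = "pmf_of_set (ksubsets k :: 'd set set)"
  have PQ: "pmf_of_set (Omega n k t :: (nat \<times> nat \<Rightarrow> 'd set) set)
      = Pi_pmf ({..<Suc t}\<times>{..<n}) undefined (\<lambda>_. ?Q)"
    unfolding Omega_eq
    by (rule Pi_pmf_of_set[symmetric]) (auto simp: ksubsets_nonempty[OF kd])
  have finP: "finite (set_pmf (Pi_pmf ({..<Suc t}\<times>{..<n}) undefined (\<lambda>_. ?Q)))"
  proof -
    have "finite ({..<Suc t}\<times>{..<n})" by simp
    thus ?thesis using ksubsets_nonempty[OF kd]
      by (subst set_Pi_pmf) (auto intro!: finite_PiE_dflt)
  qed
  have "measure_pmf.expectation (pmf_of_set (Omega n k t :: (nat \<times> nat \<Rightarrow> 'd set) set))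
      (\<lambda>S. (norm (fst (traj n k e \<eta> w0 S (Suc t)) - wstar n e))\<^sup>2)
    \<le> measure_pmf.expectation (Pi_pmf ({..<Suc t}\<times>{..<n}) undefined (\<lambda>_. ?Q))
     (\<lambda>S. Phi n e c (fst (traj n k e \<eta> w0 S (Suc t))) (snd (traj n k e \<eta> w0 S (Suc t))))"
    unfolding PQ
    by (rule integral_mono) (auto intro!: integrable_measure_pmf_finite[OF finP] Phi_ge c0)
  also have "\<dots> \<le> (1 - \<eta>) ^ (Suc t) * Phi n e c w0 (\<lambda>_. 0)"
    by (rule main_ind[OF k1 kd n1 eta e1 e2 c_def])
  also have "\<dots> \<le> (1 - \<eta>) ^ (t + 1) *
       ((norm (w0 - wstar n e))\<^sup>2 + (1 / real n) * (\<Sum>i<n. (norm (gradF e i (wstar n e)))\<^sup>2))"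
  proof -
    have "real k / real CARD('d) / 2 \<le> 1" using p0(2) unfolding p_def by (simp add: divide_le_eq)
    hence eta1: "1 - \<eta> \<ge> 0" using e2 by linarith
    have "Phi n e c w0 (\<lambda>_. 0) \<le> (norm (w0 - wstar n e))\<^sup>2 + (1 / real n) * (\<Sum>i<n. (norm (gradF e i (wstar n e)))\<^sup>2)"
    proof -
      have "c * (\<Sum>i<n. (norm (gradF e i (wstar n e)))\<^sup>2) \<le> 1 * (\<Sum>i<n. (norm (gradF e i (wstar n e)))\<^sup>2)"
        using c1 by (intro mult_right_mono sum_nonneg) auto
      thus ?thesis unfolding Phi_def using n1
        by (auto intro!: divide_right_mono)
    qed
    thus ?thesis using eta1 unfolding Suc_eq_plus1 by (intro mult_left_mono) auto
  qed
  finally show "measure_pmf.expectation (pmf_of_set (Omega n k t :: (nat \<times> nat \<Rightarrow> 'd set) set))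
      (\<lambda>S. (norm (fst (traj n k e \<eta> w0 S (Suc t)) - wstar n e))\<^sup>2)
    \<le> (1 - \<eta>) ^ (t + 1) *
       ((norm (w0 - wstar n e))\<^sup>2 + (1 / real n) * (\<Sum>i<n. (norm (gradF e i (wstar n e)))\<^sup>2))" .
qed

end
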